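(* Let $\mathbf P=(P,\leq,{}',0,1)$ be an atomic pseudo-orthomodular poset of finite rank. Then its Dedekind-MacNeille completion $\mathrm{DM}(\mathbf P)$ is orthomodular.
   Context: For $M\subseteq P$, $U(M)$, $L(M)$ are the sets of upper and lower bounds; $U(a,b)=U(\{a,b\})$ etc. A poset with complementation is a bounded poset with antitone involution $'$ ($x\le y\Rightarrow y'\le x'$, $x''=x$) with $L(x,x')=\{0\}$, $U(x,x')=\{1\}$; it is pseudo-orthomodular if $L(U(L(x,y),y'),y)=L(x,y)$ for all $x,y$. A subset $S$ is orthogonal if $s\le t'$ for all distinct $s,t\in S$; $\mathbf P$ has finite rank if every orthogonal subset is finite. An atom is a minimal element of $P\setminus\{0\}$; $\mathbf P$ is atomic if every $b>0$ lies above some atom. The Dedekind-MacNeille completion $\mathrm{DM}(\mathbf P)$ is the complete lattice of subsets $B\subseteq P$ with $L(U(B))=B$ under inclusion, with antitone involution $X'=L(\{u'\mid u\in X\})$; a lattice with complementation is orthomodular if $x\vee y=((x\vee y)\wedge y')\vee y$ for all $x,y$. *)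

theory Defs
  imports Main
begin

text \<open>The poset P is the whole carrier type 'a with its order; zero, one and the
  complementation c are explicit parameters.\<close>

definition UB :: "'a::order set \<Rightarrow> 'a set" where
  "UB M = {u. \<forall>m\<in>M. m \<le> u}"

definition LB :: "'a::order set \<Rightarrow> 'a set" where
  "LB M = {l. \<forall>m\<in>M. l \<le> m}"

definition poset_with_complementation :: "'a::order \<Rightarrow> 'a \<Rightarrow> ('a \<Rightarrow> 'a) \<Rightarrow> bool" where
  "poset_with_complementation zero one c \<longleftrightarrow>
     (\<forall>x. zero \<le> x \<and> x \<le> one) \<and>
     (\<forall>x y. x \<le> y \<longrightarrow> c y \<le> c x) \<and>
     (\<forall>x. c (c x) = x) \<and>
     (\<forall>x. LB {x, c x} = {zero}) \<and>
     (\<forall>x. UB {x, c x} = {one})"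

definition pseudo_orthomodular :: "('a::order \<Rightarrow> 'a) \<Rightarrow> bool" where
  "pseudo_orthomodular c \<longleftrightarrow>
     (\<forall>x y. LB (UB (LB {x, y} \<union> {c y}) \<union> {y}) = LB {x, y})"

definition orthogonal :: "('a::order \<Rightarrow> 'a) \<Rightarrow> 'a set \<Rightarrow> bool" where
  "orthogonal c S \<longleftrightarrow> (\<forall>s\<in>S. \<forall>t\<in>S. s \<noteq> t \<longrightarrow> s \<le> c t)"

definition finite_rank :: "('a::order \<Rightarrow> 'a) \<Rightarrow> bool" where
  "finite_rank c \<longleftrightarrow> (\<forall>S. orthogonal c S \<longrightarrow> finite S)"

definition atom :: "'a::order \<Rightarrow> 'a \<Rightarrow> bool" where
  "atom zero a \<longleftrightarrow> a \<noteq> zero \<and> \<not> (\<exists>b. b \<noteq> zero \<and> b < a)"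

definition atomic :: "'a::order \<Rightarrow> bool" where
  "atomic zero \<longleftrightarrow> (\<forall>b. zero < b \<longrightarrow> (\<exists>a. atom zero a \<and> a \<le> b))"

definition DM :: "'a::order set set" where
  "DM = {B. LB (UB B) = B}"

definition dm_compl :: "('a::order \<Rightarrow> 'a) \<Rightarrow> 'a set \<Rightarrow> 'a set" where
  "dm_compl c X = LB (c ` X)"

definition dm_join :: "'a::order set \<Rightarrow> 'a set \<Rightarrow> 'a set" where
  "dm_join X Y = LB (UB (X \<union> Y))"

text \<open>In DM, meet is intersection, join is dm_join, bottom is LB (UB {}) and top is UNIV.\<close>

definition dm_lattice_with_complementation :: "('a::order \<Rightarrow> 'a) \<Rightarrow> bool" where
  "dm_lattice_with_complementation c \<longleftrightarrow>
     (\<forall>X\<in>DM. dm_compl c X \<in> DM) \<and>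
     (\<forall>X\<in>DM. \<forall>Y\<in>DM. X \<subseteq> Y \<longrightarrow> dm_compl c Y \<subseteq> dm_compl c X) \<and>
     (\<forall>X\<in>DM. dm_compl c (dm_compl c X) = X) \<and>
     (\<forall>X\<in>DM. X \<inter> dm_compl c X = LB (UB {})) \<and>
     (\<forall>X\<in>DM. dm_join X (dm_compl c X) = UNIV)"

definition dm_orthomodular :: "('a::order \<Rightarrow> 'a) \<Rightarrow> bool" where
  "dm_orthomodular c \<longleftrightarrow> dm_lattice_with_complementation c \<and>
     (\<forall>X\<in>DM. \<forall>Y\<in>DM. dm_join X Y = dm_join (dm_join X Y \<inter> dm_compl c Y) Y)"

end

theory Submission
  imports Defs
begin

lemma UB_iff[simp]: "u \<in> UB M \<longleftrightarrow> (\<forall>m\<in>M. m \<le> u)" by (simp add: UB_def)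
lemma LB_iff[simp]: "l \<in> LB M \<longleftrightarrow> (\<forall>m\<in>M. l \<le> m)" by (simp add: LB_def)

lemma UB_anti: "A \<subseteq> B \<Longrightarrow> UB B \<subseteq> UB A" unfolding UB_def by blast
lemma LB_anti: "A \<subseteq> B \<Longrightarrow> LB B \<subseteq> LB A" unfolding LB_def by blast

lemma UB_LB_UB: "UB (LB (UB S)) = UB S"
proof
  have "S \<subseteq> LB (UB S)" by auto
  thus "UB (LB (UB S)) \<subseteq> UB S" by (rule UB_anti)
  show "UB S \<subseteq> UB (LB (UB S))" by auto
qed

lemma LB_UB_LB: "LB (UB (LB S)) = LB S"
proof
  have "S \<subseteq> UB (LB S)" by auto
  thus "LB (UB (LB S)) \<subseteq> LB S" by (rule LB_anti)
  show "LB S \<subseteq> LB (UB (LB S))" by auto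
qed

lemma LB_in_DM: "LB S \<in> DM"
  unfolding DM_def using LB_UB_LB by blast

lemma DM_eq: "X \<in> DM \<Longrightarrow> LB (UB X) = X"
  unfolding DM_def by blast

lemma DM_down: "X \<in> DM \<Longrightarrow> x \<in> X \<Longrightarrow> y \<le> x \<Longrightarrow> y \<in> X"
proof -
  assume X: "X \<in> DM" and x: "x \<in> X" and yx: "y \<le> x"
  have "y \<in> LB (UB X)" using x yx by (auto intro: order_trans)
  thus ?thesis using DM_eq[OF X] by simp
qed

lemma subset_LB_UB: "X \<subseteq> LB (UB X)"
  by auto

lemma DM_LB_UB_subset: "Y \<in> DM \<Longrightarrow> X \<subseteq> Y \<Longrightarrow> LB (UB X) \<subseteq> Y"
proof -
  assume Y: "Y \<in> DM" and XY: "X \<subseteq> Y"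
  have "LB (UB X) \<subseteq> LB (UB Y)" using XY by (intro LB_anti UB_anti)
  thus ?thesis using DM_eq[OF Y] by simp
qed

lemma DM_Int: "X \<in> DM \<Longrightarrow> Y \<in> DM \<Longrightarrow> X \<inter> Y \<in> DM"
proof -
  assume X: "X \<in> DM" and Y: "Y \<in> DM"
  have "LB (UB (X \<inter> Y)) \<subseteq> X" by (rule DM_LB_UB_subset[OF X]) auto
  moreover have "LB (UB (X \<inter> Y)) \<subseteq> Y" by (rule DM_LB_UB_subset[OF Y]) auto
  ultimately have "LB (UB (X \<inter> Y)) = X \<inter> Y" using subset_LB_UB by blast
  thus ?thesis unfolding DM_def by blast
qed

lemma UB_Un: "UB (A \<union> B) = UB A \<inter> UB B" by auto

lemma join3: "dm_join X (dm_join Y W) = LB (UB (X \<union> Y \<union> W))"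
  unfolding dm_join_def UB_Un[of X] UB_LB_UB by (simp add: UB_Un Int_assoc)

lemma join_left: "dm_join (dm_join X Y) W = LB (UB (X \<union> Y \<union> W))"
  unfolding dm_join_def UB_Un[of "LB (UB (X \<union> Y))"] UB_LB_UB by (simp add: UB_Un)

lemma UB_LB_single: "UB (LB {a}) = UB {a}"
proof
  have "{a} \<subseteq> LB {a}" by auto
  thus "UB (LB {a}) \<subseteq> UB {a}" by (rule UB_anti)
  show "UB {a} \<subseteq> UB (LB {a})" by (auto intro: order_trans)
qed

locale pc =
  fixes zero one :: "'a::order" and c :: "'a \<Rightarrow> 'a"
  assumes pc: "poset_with_complementation zero one c"
begin

lemmas P = pc[unfolded poset_with_complementation_def]
lemmas pc_parts = conjunct1[OF P] conjunct1[OF conjunct2[OF P]] conjunct1[OF conjunct2[OF conjunct2[OF P]]]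
  conjunct1[OF conjunct2[OF conjunct2[OF conjunct2[OF P]]]] conjunct2[OF conjunct2[OF conjunct2[OF conjunct2[OF P]]]]
lemma zero_le: "zero \<le> x" using pc_parts(1) by blast
lemma le_one: "x \<le> one" using pc_parts(1) by blast
lemma anti: "x \<le> y \<Longrightarrow> c y \<le> c x" using pc_parts(2) by blast
lemma invol[simp]: "c (c x) = x" using pc_parts(3) by blast
lemma LBc: "LB {x, c x} = {zero}" using pc_parts(4) by (rule spec)
lemma UBc: "UB {x, c x} = {one}" using pc_parts(5) by (rule spec)
lemma swap: "x \<le> c y \<longleftrightarrow> y \<le> c x"
  by (metis anti invol)

lemma compl_iff: "x \<in> dm_compl c X \<longleftrightarrow> c x \<in> UB X"
  unfolding dm_compl_def using swap by auto

lemma bot: "LB (UB {}) = {zero}"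
  using zero_le by (auto intro: order.antisym)

lemma LB_zero: "LB {zero} = {zero}"
  using zero_le by (auto intro: order.antisym)

lemma zero_in_DM: "X \<in> DM \<Longrightarrow> zero \<in> X"
  using DM_eq[of X] zero_le by auto

lemma compl_LB_UB: "dm_compl c (LB (UB S)) = dm_compl c S"
  unfolding set_eq_iff compl_iff UB_LB_UB by simp

lemma compl_Un: "dm_compl c (X \<union> Y) = dm_compl c X \<inter> dm_compl c Y"
  by (auto simp only: set_eq_iff Int_iff compl_iff UB_Un)

lemma compl_principal: "dm_compl c (LB {p}) = LB {c p}"
  unfolding set_eq_iff compl_iff UB_LB_single using swap by auto

lemma meet_zero: "x \<in> X \<Longrightarrow> c x \<in> UB X \<Longrightarrow> x = zero"
proof -
  assume "x \<in> X" "c x \<in> UB X"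
  hence "x \<le> c x" by auto
  hence "x \<in> LB {x, c x}" by auto
  thus ?thesis using LBc by auto
qed

lemma lattice: "dm_lattice_with_complementation c"
  unfolding dm_lattice_with_complementation_def
proof (intro conjI ballI impI)
  fix X :: "'a set" show "dm_compl c X \<in> DM" unfolding dm_compl_def by (rule LB_in_DM)
next
  fix X Y :: "'a set" assume "X \<subseteq> Y" thus "dm_compl c Y \<subseteq> dm_compl c X"
    unfolding dm_compl_def LB_def by blast
next
  fix X :: "'a set" assume X: "X \<in> DM"
  have "x \<in> dm_compl c (dm_compl c X) \<longleftrightarrow> x \<in> LB (UB X)" for x
  proof -
    have "x \<in> dm_compl c (dm_compl c X) \<longleftrightarrow> (\<forall>m\<in>dm_compl c X. m \<le> c x)"
      unfolding compl_iff[of x] by (rule UB_iff)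
    also have "\<dots> \<longleftrightarrow> (\<forall>y. c y \<in> UB X \<longrightarrow> y \<le> c x)"
      by (simp only: Ball_def compl_iff)
    also have "\<dots> \<longleftrightarrow> (\<forall>u\<in>UB X. c u \<le> c x)"
    proof
      assume L: "\<forall>y. c y \<in> UB X \<longrightarrow> y \<le> c x"
      show "\<forall>u\<in>UB X. c u \<le> c x"
      proof
        fix u assume "u \<in> UB X"
        thus "c u \<le> c x" using L[rule_format, of "c u"] by simp
      qed
    next
      assume R: "\<forall>u\<in>UB X. c u \<le> c x"
      show "\<forall>y. c y \<in> UB X \<longrightarrow> y \<le> c x"
      proof (intro allI impI)
        fix y assume "c y \<in> UB X"
        hence "c (c y) \<le> c x" using R by blast
        thus "y \<le> c x" by simp
      qed
    qed
    also have "\<dots> \<longleftrightarrow> (\<forall>u\<in>UB X. x \<le> u)"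
    proof -
      have "c u \<le> c x \<longleftrightarrow> x \<le> u" for u using swap[of "c u" x] by simp
      thus ?thesis by simp
    qed
    finally show ?thesis by simp
  qed
  thus "dm_compl c (dm_compl c X) = X" using DM_eq[OF X] by blast
next
  fix X :: "'a set" assume X: "X \<in> DM"
  show "X \<inter> dm_compl c X = LB (UB {})"
    unfolding bot
  proof
    show "X \<inter> dm_compl c X \<subseteq> {zero}" using meet_zero compl_iff by blast
    show "{zero} \<subseteq> X \<inter> dm_compl c X"
      using zero_in_DM[OF X] zero_le unfolding dm_compl_def LB_def by blast
  qed
next
  fix X :: "'a set" assume X: "X \<in> DM"
  have "UB (X \<union> dm_compl c X) \<subseteq> {one}"
  proof
    fix u assume u: "u \<in> UB (X \<union> dm_compl c X)"
    hence "u \<in> UB X" by auto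
    hence "c u \<in> dm_compl c X" using compl_iff by simp
    hence "c u \<le> u" using u by auto
    hence "u \<in> UB {u, c u}" by auto
    thus "u \<in> {one}" using UBc by blast
  qed
  thus "dm_join X (dm_compl c X) = UNIV"
    unfolding dm_join_def LB_def using le_one by blast
qed

definition good :: "'a set \<Rightarrow> bool" where
  "good Y \<longleftrightarrow> Y \<in> DM \<and> (\<forall>Z\<in>DM. Y \<subseteq> Z \<longrightarrow> Z = dm_join Y (Z \<inter> dm_compl c Y))"

lemma good_step:
  assumes g: "good Y0" and orth: "Y0 \<subseteq> LB {c a}"
    and gp: "good (LB {a})"
  shows "good (dm_join Y0 (LB {a}))"
proof -
  let ?Y = "dm_join Y0 (LB {a})"
  have Y0: "Y0 \<in> DM" using g good_def by blast
  have cY: "dm_compl c ?Y = dm_compl c Y0 \<inter> LB {c a}"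
    unfolding dm_join_def compl_LB_UB compl_Un compl_principal ..
  have "Z = dm_join ?Y (Z \<inter> dm_compl c ?Y)" if Z: "Z \<in> DM" and YZ: "?Y \<subseteq> Z" for Z
  proof -
    have s0: "Y0 \<subseteq> Z" and sa: "LB {a} \<subseteq> Z" using YZ subset_LB_UB[of "Y0 \<union> LB {a}"]
      unfolding dm_join_def by blast+
    have e1: "Z = dm_join (LB {a}) (Z \<inter> LB {c a})"
      using gp Z sa unfolding good_def compl_principal by blast
    define W where "W = Z \<inter> LB {c a}"
    have e1': "Z = dm_join (LB {a}) W" using e1 W_def by simp
    have W: "W \<in> DM" using DM_Int Z LB_in_DM W_def by blast
    have "Y0 \<subseteq> W" using s0 orth W_def by blast
    hence e2: "W = dm_join Y0 (W \<inter> dm_compl c Y0)"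
      using g W unfolding good_def by blast
    have e3: "W \<inter> dm_compl c Y0 = Z \<inter> dm_compl c ?Y" using cY W_def by blast
    have "dm_join (LB {a}) W = dm_join (LB {a}) (dm_join Y0 (Z \<inter> dm_compl c ?Y))"
      unfolding e3[symmetric] e2[symmetric] ..
    hence "Z = dm_join (LB {a}) (dm_join Y0 (Z \<inter> dm_compl c ?Y))"
      using e1' by simp
    also have "\<dots> = LB (UB (LB {a} \<union> Y0 \<union> (Z \<inter> dm_compl c ?Y)))"
      by (rule join3)
    also have "\<dots> = LB (UB (Y0 \<union> LB {a} \<union> (Z \<inter> dm_compl c ?Y)))"
      by (simp only: Un_commute[of "LB {a}" Y0])
    also have "\<dots> = dm_join ?Y (Z \<inter> dm_compl c ?Y)"
      by (rule join_left[symmetric])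
    finally show ?thesis .
  qed
  thus ?thesis unfolding good_def dm_join_def using LB_in_DM by blast
qed

end

locale pom = pc +
  assumes pom: "pseudo_orthomodular c"
begin

lemma dual_principal:
  assumes A: "A \<in> DM" and Ay: "A \<subseteq> LB {y}"
  shows "LB (UB (A \<union> {c y})) \<inter> LB {y} \<subseteq> A"
proof
  fix z assume z: "z \<in> LB (UB (A \<union> {c y})) \<inter> LB {y}"
  have "z \<le> u" if u: "u \<in> UB A" for u
  proof -
    have "A \<subseteq> LB {u, y}" using u Ay unfolding UB_def LB_def by blast
    hence "UB (LB {u, y} \<union> {c y}) \<subseteq> UB (A \<union> {c y})" unfolding UB_def by blast
    hence zin: "z \<in> LB (UB (LB {u, y} \<union> {c y}) \<union> {y})" using z unfolding LB_def by blast
    have eq: "LB (UB (LB {u, y} \<union> {c y}) \<union> {y}) = LB {u, y}"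
      by (rule pom[unfolded pseudo_orthomodular_def, rule_format])
    have "z \<in> LB {u, y}" using zin by (simp only: eq)
    thus "z \<le> u" by simp
  qed
  hence "z \<in> LB (UB A)" by simp
  thus "z \<in> A" using DM_eq[OF A] by simp
qed

lemma good_principal: "good (LB {p})"
  unfolding good_def
proof (intro conjI ballI impI)
  show "LB {p} \<in> DM" by (rule LB_in_DM)
next
  fix Z assume Z: "Z \<in> DM" and pZ: "LB {p} \<subseteq> Z"
  have pp: "p \<in> LB {p}" unfolding LB_def by simp
  hence p: "p \<in> Z" using pZ by blast
  let ?R = "LB {p} \<union> (Z \<inter> LB {c p})"
  let ?A = "dm_compl c Z"
  have A: "?A \<in> DM" unfolding dm_compl_def by (rule LB_in_DM)
  have Ay: "?A \<subseteq> LB {c p}"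
  proof
    fix a assume "a \<in> ?A"
    hence "c a \<in> UB Z" by (simp only: compl_iff)
    hence "p \<le> c a" using p unfolding UB_def by blast
    hence "a \<le> c p" using swap[of a p] by simp
    thus "a \<in> LB {c p}" unfolding LB_def by simp
  qed
  have key: "u \<in> UB Z" if u: "u \<in> UB ?R" for u
  proof -
    have "p \<in> ?R" using pp by blast
    hence pu: "p \<le> u" using u unfolding UB_def by blast
    have "c u \<le> v" if v: "v \<in> UB (?A \<union> {c (c p)})" for v
    proof -
      have "c v \<le> w" if w: "w \<in> UB Z" for w
      proof -
        have "c w \<in> ?A" using w by (simp only: compl_iff invol)
        hence "c w \<le> v" using v unfolding UB_def by blast
        thus ?thesis using swap[of "c v" "c w"] by simp
      qed
      hence "c v \<in> LB (UB Z)" unfolding LB_def by blast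
      hence cvZ: "c v \<in> Z" using DM_eq[OF Z] by blast
      have "p \<le> v" using v unfolding UB_def by simp
      hence "c v \<le> c p" by (rule anti)
      hence "c v \<in> LB {c p}" unfolding LB_def by simp
      hence "c v \<in> ?R" using cvZ by blast
      hence "c v \<le> u" using u unfolding UB_def by blast
      thus "c u \<le> v" using swap[of "c u" "c v"] by simp
    qed
    hence "c u \<in> LB (UB (?A \<union> {c (c p)}))" unfolding LB_def by blast
    moreover have "c u \<in> LB {c p}" using anti[OF pu] unfolding LB_def by simp
    ultimately have "c u \<in> LB (UB (?A \<union> {c (c p)})) \<inter> LB {c p}" by blast
    hence "c u \<in> ?A" using dual_principal[OF A Ay] by blast
    thus "u \<in> UB Z" by (simp only: compl_iff invol)
  qed
  have "Z \<subseteq> LB (UB ?R)"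
  proof
    fix x assume x: "x \<in> Z"
    have "x \<le> u" if u: "u \<in> UB ?R" for u
    proof -
      have "u \<in> UB Z" by (rule key[OF u])
      thus ?thesis using x unfolding UB_def by simp
    qed
    thus "x \<in> LB (UB ?R)" unfolding LB_def by simp
  qed
  moreover have "LB (UB ?R) \<subseteq> Z"
  proof (rule DM_LB_UB_subset[OF Z])
    show "?R \<subseteq> Z" using pZ by blast
  qed
  ultimately have "Z = LB (UB ?R)" by (rule equalityI)
  thus "Z = dm_join (LB {p}) (Z \<inter> dm_compl c (LB {p}))"
    unfolding dm_join_def compl_principal .
qed

lemma good_finite: "finite S \<Longrightarrow> orthogonal c S \<Longrightarrow> good (LB (UB S))"
proof (induction S rule: finite_induct)
  case empty
  show ?case using good_principal[of zero] unfolding bot LB_zero .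
next
  case (insert a S)
  have oS: "orthogonal c S" using insert.prems unfolding orthogonal_def by blast
  have g: "good (LB (UB S))" using insert.IH oS by blast
  have "c a \<in> UB S"
  proof (simp only: UB_iff, intro ballI)
    fix s assume s: "s \<in> S"
    hence "a \<noteq> s" using insert.hyps by blast
    hence "a \<le> c s" using insert.prems s unfolding orthogonal_def by blast
    thus "s \<le> c a" using swap by blast
  qed
  hence orth: "LB (UB S) \<subseteq> LB {c a}" by auto
  have "good (dm_join (LB (UB S)) (LB {a}))" by (rule good_step[OF g orth good_principal])
  moreover have "dm_join (LB (UB S)) (LB {a}) = LB (UB (insert a S))"
    unfolding dm_join_def UB_Un UB_LB_UB UB_LB_single insert_is_Un[of a S] using Int_commute by metis
  ultimately show ?case by simp
qed

lemma all_good: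
  assumes at: "atomic zero" and fr: "finite_rank c" and Y: "Y \<in> DM"
  shows "good Y"
proof -
  define F where "F = {S. S \<subseteq> {a. atom zero a \<and> a \<in> Y} \<and> orthogonal c S}"
  have "\<forall>C\<in>chains F. \<Union>C \<in> F"
  proof
    fix C assume C: "C \<in> chains F"
    have "orthogonal c (\<Union>C)" unfolding orthogonal_def
    proof (intro ballI impI)
      fix s t assume s: "s \<in> \<Union>C" and t: "t \<in> \<Union>C" and st: "s \<noteq> t"
      obtain S1 where S1: "S1 \<in> C" "s \<in> S1" using s by blast
      obtain S2 where S2: "S2 \<in> C" "t \<in> S2" using t by blast
      have "S1 \<subseteq> S2 \<or> S2 \<subseteq> S1" using C S1 S2 unfolding chains_def chain_subset_def by blast
      then obtain S3 where "S3 \<in> C" "s \<in> S3" "t \<in> S3" using S1 S2 by blast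
      moreover have "orthogonal c S3" using C \<open>S3 \<in> C\<close> unfolding chains_def F_def by blast
      ultimately show "s \<le> c t" using st unfolding orthogonal_def by blast
    qed
    moreover have "\<Union>C \<subseteq> {a. atom zero a \<and> a \<in> Y}" using C unfolding chains_def F_def by blast
    ultimately show "\<Union>C \<in> F" unfolding F_def by blast
  qed
  from Zorn_Lemma[OF this] obtain S where S: "S \<in> F" and max: "\<forall>X\<in>F. S \<subseteq> X \<longrightarrow> X = S"
    by blast
  have oS: "orthogonal c S" and SY: "S \<subseteq> {a. atom zero a \<and> a \<in> Y}" using S F_def by auto
  have fin: "finite S" using fr oS unfolding finite_rank_def by blast
  let ?J = "LB (UB S)"
  have gJ: "good ?J" using good_finite[OF fin oS] .
  have JY: "?J \<subseteq> Y" using DM_LB_UB_subset[OF Y] SY by blast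
  have e: "Y = dm_join ?J (Y \<inter> dm_compl c ?J)" using gJ Y JY unfolding good_def by blast
  have small: "Y \<inter> dm_compl c ?J \<subseteq> {zero}"
  proof
    fix b assume b: "b \<in> Y \<inter> dm_compl c ?J"
    show "b \<in> {zero}"
    proof (rule ccontr)
      assume "b \<notin> {zero}"
      hence "zero < b" using zero_le[of b] by (auto simp: order.order_iff_strict)
      then obtain a where a: "atom zero a" "a \<le> b" using at unfolding atomic_def by blast
      have aY: "a \<in> Y" using DM_down[OF Y] b a by blast
      have aJ': "a \<in> dm_compl c ?J"
        using DM_down[of "dm_compl c ?J"] b a unfolding dm_compl_def using LB_in_DM by blast
      hence caS: "c a \<in> UB S" using compl_iff compl_LB_UB by simp
      have "orthogonal c (insert a S)" unfolding orthogonal_def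
      proof (intro ballI impI)
        fix s t assume s: "s \<in> insert a S" and t: "t \<in> insert a S" and st: "s \<noteq> t"
        show "s \<le> c t"
        proof (cases "s = a")
          case True
          hence "t \<in> S" using t st by blast
          thus ?thesis using caS True swap by auto
        next
          case False
          hence sS: "s \<in> S" using s by blast
          show ?thesis
          proof (cases "t = a")
            case True thus ?thesis using caS sS by auto
          next
            case False thus ?thesis using t sS st oS unfolding orthogonal_def by blast
          qed
        qed
      qed
      hence "insert a S \<in> F" using SY a aY unfolding F_def by blast
      hence "a \<in> S" using max by blast
      hence "a \<in> ?J" by auto
      moreover have "c a \<in> UB ?J" using caS by (simp only: UB_LB_UB)
      ultimately have "a = zero" by (rule meet_zero)
      thus False using a unfolding atom_def by blast
    qed
  qed
  have zJ: "zero \<in> ?J" using zero_in_DM LB_in_DM by blast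
  have "Y \<subseteq> ?J"
  proof -
    have "?J \<union> (Y \<inter> dm_compl c ?J) \<subseteq> ?J" using small zJ by blast
    hence "LB (UB (?J \<union> (Y \<inter> dm_compl c ?J))) \<subseteq> ?J" using DM_LB_UB_subset LB_in_DM by blast
    thus ?thesis using e unfolding dm_join_def by blast
  qed
  hence "Y = ?J" using JY by blast
  thus ?thesis using gJ by simp
qed

end

theorem theorem7:
  fixes zero one :: "'a::order" and c :: "'a \<Rightarrow> 'a"
  assumes "poset_with_complementation zero one c"
    and "pseudo_orthomodular c"
    and "atomic zero"
    and "finite_rank c"
  shows "dm_orthomodular c"
proof -
  interpret pom zero one c using assms by (unfold_locales) auto
  have "dm_join X Y = dm_join (dm_join X Y \<inter> dm_compl c Y) Y" if X: "X \<in> DM" and Y: "Y \<in> DM" for X Y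
  proof -
    have g: "good Y" using all_good assms(3,4) Y by blast
    have "Y \<subseteq> dm_join X Y" unfolding dm_join_def by auto
    moreover have "dm_join X Y \<in> DM" unfolding dm_join_def by (rule LB_in_DM)
    ultimately have "dm_join X Y = dm_join Y (dm_join X Y \<inter> dm_compl c Y)"
      using g unfolding good_def by blast
    thus ?thesis unfolding dm_join_def by (simp add: Un_commute)
  qed
  thus ?thesis unfolding dm_orthomodular_def using lattice by blast
qed

end
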